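(* Let $(X,\mu)$ be a non-atomic probability measure space equipped with a tree $\mathcal{T}$, with associated dyadic maximal operator $\mathcal{M}_{\mathcal{T}}$, and let $0<q<1$. Let $g:(0,1]\to\mathbb{R}^+$ be integrable and non-increasing with $\int_0^1\big(\frac1t\int_0^t g\big)^q dt<+\infty$, and let $\phi_n:X\to\mathbb{R}^+$ be measurable with $\phi_n^*=g$ for all $n$ and $$\lim_n\int_X(\mathcal{M}_{\mathcal{T}}\phi_n)^q\,d\mu=\int_0^1\Big(\frac1t\int_0^t g\Big)^q dt.$$ Then $$\lim_n\int_0^1\Big|(\mathcal{M}_{\mathcal{T}}\phi_n)^*(t)-\frac1t\int_0^t g\Big|^q dt=0.$$
   Context: A set $\mathcal{T}$ of measurable subsets of $X$ is a tree if: (i) $X\in\mathcal{T}$ and $\mu(I)>0$ for every $I\in\mathcal{T}$; (ii) for every $I\in\mathcal{T}$ there is a finite or countable set $C(I)\subseteq\mathcal{T}$ with at least two elements, consisting of pairwise disjoint subsets of $I$ whose union is $I$; (iii) $\mathcal{T}=\bigcup_{m\ge0}\mathcal{T}_{(m)}$ where $\mathcal{T}_{(0)}=\{X\}$ and $\mathcal{T}_{(m+1)}=\bigcup_{I\in\mathcal{T}_{(m)}}C(I)$; (iv) $\lim_{m\to\infty}\sup_{I\in\mathcal{T}_{(m)}}\mu(I)=0$. The dyadic maximal operator is $\mathcal{M}_{\mathcal{T}}\phi(x)=\sup\{\frac{1}{\mu(I)}\int_I|\phi|\,d\mu : x\in I\in\mathcal{T}\}$. The decreasing rearrangement of a measurable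 $\psi$ on $X$ is $\psi^*(t)=\sup_{e\subseteq X,\ \mu(e)=t}\ \inf_{x\in e}|\psi(x)|$ for $0<t\le1$. *)

theory Defs
  imports "HOL-Probability.Probability"
begin

definition nonatomic :: "'a measure \<Rightarrow> bool" where
  "nonatomic M \<longleftrightarrow> (\<forall>A\<in>sets M. measure M A > 0 \<longrightarrow>
      (\<exists>B\<in>sets M. B \<subseteq> A \<and> 0 < measure M B \<and> measure M B < measure M A))"

fun tree_level :: "('a set \<Rightarrow> 'a set set) \<Rightarrow> 'a set \<Rightarrow> nat \<Rightarrow> 'a set set" where
  "tree_level C X 0 = {X}"
| "tree_level C X (Suc m) = \<Union> (C ` tree_level C X m)"

definition is_tree :: "'a measure \<Rightarrow> 'a set set \<Rightarrow> bool" where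
  "is_tree M T \<longleftrightarrow>
     space M \<in> T \<and> (\<forall>I\<in>T. I \<in> sets M \<and> measure M I > 0) \<and>
     (\<exists>C. (\<forall>I\<in>T. C I \<subseteq> T \<and> countable (C I) \<and>
              (\<exists>J K. J \<in> C I \<and> K \<in> C I \<and> J \<noteq> K) \<and>
              disjoint (C I) \<and> (\<forall>J\<in>C I. J \<subseteq> I) \<and> \<Union> (C I) = I) \<and>
          T = (\<Union>m. tree_level C (space M) m) \<and>
          (\<lambda>m. Sup (measure M ` tree_level C (space M) m)) \<longlonglongrightarrow> 0)"

definition dyadic_max :: "'a measure \<Rightarrow> 'a set set \<Rightarrow> ('a \<Rightarrow> real) \<Rightarrow> 'a \<Rightarrow> ennreal" where
  "dyadic_max M T \<phi> x =
     (SUP I\<in>{I\<in>T. x \<in> I}. ennreal (1 / measure M I) * (\<integral>\<^sup>+ y\<in>I. ennreal \<bar>\<phi> y\<bar> \<partial>M))"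

text \<open>Decreasing rearrangement of a [0,\<infinity>]-valued function (the absolute value is implicit).\<close>
definition rearr :: "'a measure \<Rightarrow> ('a \<Rightarrow> ennreal) \<Rightarrow> real \<Rightarrow> ennreal" where
  "rearr M \<psi> t = (SUP e\<in>{e\<in>sets M. measure M e = t}. INF x\<in>e. \<psi> x)"

definition epowr :: "ennreal \<Rightarrow> real \<Rightarrow> ennreal" where
  "epowr a q = (if a = top then top else ennreal (enn2real a powr q))"

definition ediff :: "ennreal \<Rightarrow> real \<Rightarrow> ennreal" where
  "ediff a b = (if a = top then top else ennreal \<bar>enn2real a - b\<bar>)"

definition avg :: "(real \<Rightarrow> real) \<Rightarrow> real \<Rightarrow> real" where
  "avg g t = (1 / t) * (LBINT s:{0<..t}. g s)"

end

theory Submission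
  imports Defs
begin

context prob_space begin

lemma small_subset:
  assumes na: "nonatomic M" and A: "A \<in> events" "prob A > 0"
  shows "\<exists>B\<in>events. B \<subseteq> A \<and> 0 < prob B \<and> prob B \<le> prob A / 2 ^ n"
proof (induction n)
  case 0 then show ?case using A by auto
next
  case (Suc n)
  then obtain B where B: "B \<in> events" "B \<subseteq> A" "0 < prob B" "prob B \<le> prob A / 2 ^ n" by auto
  then obtain B' where B': "B' \<in> events" "B' \<subseteq> B" "0 < prob B'" "prob B' < prob B"
    using na unfolding nonatomic_def by blast
  have e: "prob A / 2 ^ Suc n = (prob A / 2 ^ n) / 2" by simp
  have h2: "prob B / 2 \<le> (prob A / 2 ^ n) / 2" using B(4) by (rule divide_right_mono) auto
  show ?case
  proof (cases "prob B' \<le> prob B / 2")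
    case True 
    have "prob B' \<le> prob A / 2 ^ Suc n" unfolding e using True h2 by linarith
    then show ?thesis using B B' by blast
  next
    case False
    have d: "prob (B - B') = prob B - prob B'" using B B' by (simp add: finite_measure_Diff)
    have "prob (B - B') \<le> prob A / 2 ^ Suc n" unfolding e d using False h2 by linarith
    moreover have "0 < prob (B - B')" unfolding d using B'(4) by linarith
    moreover have "B - B' \<in> events" using B B' by blast
    ultimately show ?thesis using B by blast
  qed
qed

lemma small_subset_eps:
  assumes na: "nonatomic M" and A: "A \<in> events" "prob A > 0" and e: "e > 0"
  shows "\<exists>B\<in>events. B \<subseteq> A \<and> 0 < prob B \<and> prob B \<le> e"
proof -
  obtain n where n: "prob A / e < 2 ^ n" using real_arch_pow[of 2 "prob A / e"] by auto
  then have "prob A / 2 ^ n < e" using e by (simp add: field_simps)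
  moreover obtain B where "B\<in>events" "B \<subseteq> A" "0 < prob B" "prob B \<le> prob A / 2 ^ n"
    using small_subset[OF na A, of n] by blast
  ultimately show ?thesis by (intro bexI[of _ B]) auto
qed

lemma exact_subset:
  assumes na: "nonatomic M" and A: "A \<in> events" and t: "0 \<le> t" "t \<le> prob A"
  shows "\<exists>e\<in>events. e \<subseteq> A \<and> prob e = t"
proof (cases "t = 0 \<or> t = prob A")
  case True then show ?thesis using A by (auto intro: bexI[of _ "{}"])
next
  case False
  then have t0: "0 < t" and tA: "t < prob A" using t by auto
  define P where "P D F \<longleftrightarrow> F \<in> events \<and> F \<subseteq> A - D \<and> prob F \<le> t - prob D" for D F
  define s where "s D = Sup (prob ` {F. P D F})" for D
  define nxt where "nxt D = (SOME F. P D F \<and> s D / 2 \<le> prob F)" for D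
  have bdd: "bdd_above (prob ` {F. P D F})" for D
    by (rule bdd_aboveI[of _ 1]) auto
  have ex: "\<exists>F. P D F \<and> s D / 2 \<le> prob F" if "prob D \<le> t" for D
  proof -
    have P0: "P D {}" using that by (auto simp: P_def)
    then have s0: "0 \<le> s D" unfolding s_def using cSup_upper[OF _ bdd, of 0 D] by force
    show ?thesis
    proof (cases "s D = 0")
      case True then show ?thesis using P0 by auto
    next
      case False
      then have "s D / 2 < Sup (prob ` {F. P D F})" using s0 unfolding s_def by auto
      then obtain x where "x \<in> prob ` {F. P D F}" "s D / 2 < x"
        using less_cSup_iff[OF _ bdd] P0 by blast
      then show ?thesis by force
    qed
  qed
  have nxtP: "P D (nxt D) \<and> s D / 2 \<le> prob (nxt D)" if "prob D \<le> t" for D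
    unfolding nxt_def using someI_ex[OF ex[OF that]] .
  define D where "D = rec_nat {} (\<lambda>_ X. X \<union> nxt X)"
  have D0: "D 0 = {}" and DS: "D (Suc k) = D k \<union> nxt (D k)" for k by (simp_all add: D_def)
  have inv: "D k \<in> events \<and> D k \<subseteq> A \<and> prob (D k) \<le> t" for k
  proof (induction k)
    case 0 then show ?case using t by (simp add: D0)
  next
    case (Suc k)
    then have n: "P (D k) (nxt (D k))" using nxtP by blast
    then have "prob (D k \<union> nxt (D k)) = prob (D k) + prob (nxt (D k))"
      using Suc by (intro finite_measure_Union) (auto simp: P_def)
    then show ?case using Suc n unfolding DS P_def by auto
  qed
  have inc: "incseq D" by (rule incseq_SucI) (simp add: DS)
  define e where "e = (\<Union>k. D k)"
  have eev: "e \<in> events" unfolding e_def using inv by auto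
  have eA: "e \<subseteq> A" unfolding e_def using inv by auto
  have lim: "(\<lambda>k. prob (D k)) \<longlonglongrightarrow> prob e"
    unfolding e_def using inv inc by (intro finite_Lim_measure_incseq) auto
  have et: "prob e \<le> t" using lim inv by (intro LIMSEQ_le_const2[OF lim]) auto
  have "\<not> prob e < t"
  proof
    assume lt: "prob e < t"
    have "prob (A - e) = prob A - prob e" using eev A eA by (simp add: finite_measure_Diff)
    then have "prob (A - e) > 0" using lt tA by simp
    then obtain G where G: "G \<in> events" "G \<subseteq> A - e" "0 < prob G" "prob G \<le> t - prob e"
      using small_subset_eps[OF na _ _, of "A - e" "t - prob e"] eev A lt by auto
    have big: "prob G / 2 \<le> prob (nxt (D k))" for k
    proof -
      have Dke: "D k \<subseteq> e" unfolding e_def by auto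
      then have "prob (D k) \<le> prob e" using eev by (intro finite_measure_mono) auto
      then have "P (D k) G" using G Dke unfolding P_def by auto
      then have "prob G \<le> s (D k)" unfolding s_def by (intro cSup_upper[OF _ bdd]) auto
      then show ?thesis using nxtP[of "D k"] inv[of k] by auto
    qed
    have grow: "real k * (prob G / 2) \<le> prob (D k)" for k
    proof (induction k)
      case 0 then show ?case by (simp add: D0)
    next
      case (Suc k)
      have n: "P (D k) (nxt (D k))" using nxtP inv by blast
      then have "prob (D k \<union> nxt (D k)) = prob (D k) + prob (nxt (D k))"
        using inv[of k] by (intro finite_measure_Union) (auto simp: P_def)
      then show ?case using Suc big[of k] unfolding DS by (simp add: algebra_simps)
    qed
    obtain k where k: "2 / prob G < real k" using reals_Archimedean2 by blast
    then have "2 < real k * prob G" using G(3) by (simp add: field_simps)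
    then have "1 < real k * (prob G / 2)" by simp
    moreover have "prob (D k) \<le> 1" by simp
    ultimately show False using grow[of k] by linarith
  qed
  then show ?thesis using et eev eA by (intro bexI[of _ e]) auto
qed

lemma super_core:
  assumes na: "nonatomic M" and psi[measurable]: "\<psi> \<in> borel_measurable M"
    and t: "0 < t" "t < prob {x\<in>space M. c < \<psi> x}"
  shows "c < rearr M \<psi> t"
proof -
  have "c \<noteq> \<top>"
  proof
    assume "c = \<top>" then have "{x\<in>space M. c < \<psi> x} = {}" by auto
    then have "prob {x\<in>space M. c < \<psi> x} = 0" by (simp only: measure_empty)
    then show False using t by linarith
  qed
  then obtain l where l: "c = ennreal l" "0 \<le> l" by (cases c) auto
  define A where "A k = {x\<in>space M. ennreal (l + 1 / Suc k) < \<psi> x}" for k :: nat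
  have Aev: "A k \<in> events" for k unfolding A_def by measurable
  have inc: "incseq A"
  proof (rule incseq_SucI)
    fix k
    have "ennreal (l + 1 / Suc (Suc k)) \<le> ennreal (l + 1 / Suc k)"
      by (intro ennreal_leI) (simp add: frac_le)
    then show "A k \<subseteq> A (Suc k)" unfolding A_def by (auto intro: le_less_trans)
  qed
  have U: "(\<Union>k. A k) = {x\<in>space M. c < \<psi> x}"
  proof (intro equalityI subsetI)
    fix x assume "x \<in> (\<Union>k. A k)"
    then obtain k where "x \<in> A k" by auto
    moreover have "ennreal l \<le> ennreal (l + 1 / Suc k)" by (intro ennreal_leI) simp
    ultimately show "x \<in> {x\<in>space M. c < \<psi> x}" unfolding A_def l by (auto intro: le_less_trans)
  next
    fix x assume x: "x \<in> {x\<in>space M. c < \<psi> x}"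
    show "x \<in> (\<Union>k. A k)"
    proof (cases "\<psi> x")
      case (real r)
      then have "l < r" using x l by (auto simp: ennreal_less_iff)
      obtain k0 where k0: "1 / (r - l) < real k0" using reals_Archimedean2 by blast
      define k where "k = k0"
      have k: "1 / (r - l) < real (Suc k)" using k0 unfolding k_def by simp
      have rl: "0 < r - l" using \<open>l < r\<close> by simp
      have "1 < real (Suc k) * (r - l)" using k rl by (simp add: divide_less_eq)
      then have "1 / Suc k < r - l" by (simp add: divide_less_eq mult.commute)
      then have "l + 1 / Suc k < r" by linarith
      then have "ennreal (l + 1 / Suc k) < ennreal r" using l by (subst ennreal_less_iff) auto
      then have "ennreal (l + 1 / Suc k) < \<psi> x" using real by simp
      then show ?thesis using x unfolding A_def by auto
    next
      case top then show ?thesis using x unfolding A_def by auto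
    qed
  qed
  have "(\<lambda>k. prob (A k)) \<longlonglongrightarrow> prob (\<Union>k. A k)"
    using Aev inc by (intro finite_Lim_measure_incseq) auto
  then have "eventually (\<lambda>k. t < prob (A k)) sequentially"
    using t U by (intro order_tendstoD) auto
  then obtain k where k: "t < prob (A k)" by (metis eventually_sequentially order_refl)
  obtain e where e: "e \<in> events" "e \<subseteq> A k" "prob e = t"
    using exact_subset[OF na Aev[of k], of t] t k by auto
  have "c < ennreal (l + 1 / Suc k)" unfolding l using l(2) by (subst ennreal_less_iff) auto
  also have "\<dots> \<le> (INF x\<in>e. \<psi> x)" using e unfolding A_def by (intro INF_greatest) auto
  also have "\<dots> \<le> rearr M \<psi> t" unfolding rearr_def using e by (intro SUP_upper) auto
  finally show ?thesis .
qed

lemma rearr_antitone: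
  assumes na: "nonatomic M" and t: "0 \<le> t" "t \<le> u"
  shows "rearr M \<psi> u \<le> rearr M \<psi> t"
  unfolding rearr_def
proof (intro SUP_least)
  fix e assume e: "e \<in> {e \<in> events. prob e = u}"
  then obtain e' where e': "e' \<in> events" "e' \<subseteq> e" "prob e' = t"
    using exact_subset[OF na, of e t] t by auto
  have "(INF x\<in>e. \<psi> x) \<le> (INF x\<in>e'. \<psi> x)" using e' by (intro INF_superset_mono) auto
  also have "\<dots> \<le> (SUP e\<in>{e \<in> events. prob e = t}. INF x\<in>e. \<psi> x)" using e' by (intro SUP_upper) auto
  finally show "(INF x\<in>e. \<psi> x) \<le> (SUP e\<in>{e \<in> events. prob e = t}. INF x\<in>e. \<psi> x)" .
qed

end


lemma emeasure_lborel_Ici_top: "emeasure lborel {0::real..} = \<top>"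
proof (rule ccontr)
  assume ne: "emeasure lborel {0::real..} \<noteq> \<top>"
  then obtain r where r: "emeasure lborel {0::real..} = ennreal r" "0 \<le> r"
    by (cases "emeasure lborel {0::real..}") auto
  have "ennreal (r + 1) \<le> emeasure lborel {0::real..}"
  proof -
    have "emeasure lborel {0::real..<r+1} \<le> emeasure lborel {0::real..}"
      by (intro emeasure_mono) auto
    then show ?thesis using r by simp
  qed
  then show False using r by (simp add: ennreal_le_iff)
qed

lemma level_measure_real:
  "emeasure lborel {s::real. 0 \<le> s \<and> ennreal s < c} = c"
proof (cases c)
  case (real r)
  then have "{s::real. 0 \<le> s \<and> ennreal s < c} = {0..<r}"
    by (auto simp: ennreal_less_iff)
  then show ?thesis using real by simp
next
  case top
  then have "{s::real. 0 \<le> s \<and> ennreal s < c} = {0..}" by auto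
  then show ?thesis using top emeasure_lborel_Ici_top by simp
qed

lemma layer_cake:
  assumes sf: "sigma_finite_measure M" and F[measurable]: "F \<in> borel_measurable M"
  shows "(\<integral>\<^sup>+x. F x \<partial>M) = (\<integral>\<^sup>+s\<in>{0..}. emeasure M {x\<in>space M. ennreal s < F x} \<partial>lborel)"
proof -
  interpret pair_sigma_finite M lborel
    using sf by (simp add: pair_sigma_finite_def lborel.sigma_finite_measure_axioms)
  have m: "(\<lambda>(x, s). indicator {s::real. 0 \<le> s \<and> ennreal s < F x} s) \<in> borel_measurable (M \<Otimes>\<^sub>M lborel)"
    unfolding indicator_def by measurable
  have inner: "F x = (\<integral>\<^sup>+s. indicator {s::real. 0 \<le> s \<and> ennreal s < F x} s \<partial>lborel)" for x
    by (subst nn_integral_indicator) (auto simp: level_measure_real)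
  have "(\<integral>\<^sup>+x. F x \<partial>M) = (\<integral>\<^sup>+x. (\<integral>\<^sup>+s. indicator {s::real. 0 \<le> s \<and> ennreal s < F x} s \<partial>lborel) \<partial>M)"
    using inner by simp
  also have "\<dots> = (\<integral>\<^sup>+s. (\<integral>\<^sup>+x. indicator {s::real. 0 \<le> s \<and> ennreal s < F x} s \<partial>M) \<partial>lborel)"
    using Fubini'[of "\<lambda>x s. indicator {s::real. 0 \<le> s \<and> ennreal s < F x} s"] m by simp
  also have "\<dots> = (\<integral>\<^sup>+s\<in>{0..}. emeasure M {x\<in>space M. ennreal s < F x} \<partial>lborel)"
  proof (intro nn_integral_cong)
    fix s :: real
    have "(\<integral>\<^sup>+x. indicator {s::real. 0 \<le> s \<and> ennreal s < F x} s \<partial>M)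
        = (\<integral>\<^sup>+x. indicator {0..} s * indicator {x\<in>space M. ennreal s < F x} x \<partial>M)"
      by (intro nn_integral_cong) (auto simp: indicator_def)
    also have "\<dots> = indicator {0..} s * emeasure M {x\<in>space M. ennreal s < F x}"
      by (subst nn_integral_cmult) auto
    finally show "(\<integral>\<^sup>+x. indicator {s::real. 0 \<le> s \<and> ennreal s < F x} s \<partial>M)
       = emeasure M {x\<in>space M. ennreal s < F x} * indicator {0..} s" by (simp add: mult.commute)
  qed
  finally show ?thesis .
qed

lemma layer_compare:
  assumes "sigma_finite_measure M" "sigma_finite_measure N"
    and [measurable]: "F \<in> borel_measurable M" "G \<in> borel_measurable N"
    and le: "\<And>s::real. 0 \<le> s \<Longrightarrow> emeasure M {x\<in>space M. ennreal s < F x} \<le> emeasure N {x\<in>space N. ennreal s < G x}"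
  shows "(\<integral>\<^sup>+x. F x \<partial>M) \<le> (\<integral>\<^sup>+x. G x \<partial>N)"
  unfolding layer_cake[OF assms(1,3)] layer_cake[OF assms(2,4)]
  by (intro nn_integral_mono) (auto simp: indicator_def intro: le)



locale treeC =
  fixes T :: "'a set set" and C :: "'a set \<Rightarrow> 'a set set" and X :: "'a set"
  assumes XT: "X \<in> T"
    and hC: "\<And>I. I \<in> T \<Longrightarrow> C I \<subseteq> T \<and> countable (C I) \<and> disjoint (C I) \<and> (\<forall>J\<in>C I. J \<subseteq> I) \<and> \<Union> (C I) = I"
    and TL: "T = (\<Union>m. tree_level C X m)"
begin

abbreviation "L \<equiv> tree_level C X"

lemma hC_sub: "I \<in> T \<Longrightarrow> C I \<subseteq> T" using hC by blast
lemma hC_cnt: "I \<in> T \<Longrightarrow> countable (C I)" using hC by blast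
lemma hC_disj: "I \<in> T \<Longrightarrow> disjoint (C I)" using hC by blast
lemma hC_le: "I \<in> T \<Longrightarrow> J \<in> C I \<Longrightarrow> J \<subseteq> I" using hC by blast
lemma hC_un: "I \<in> T \<Longrightarrow> \<Union> (C I) = I" using hC by blast

lemma lev_T: "L m \<subseteq> T"
proof (induction m)
  case 0 then show ?case using XT by simp
next
  case (Suc m) then show ?case using hC_sub by auto
qed

lemma lev_T_mem: "I \<in> L m \<Longrightarrow> I \<in> T" using lev_T by blast

lemma lev_countable: "countable (L m)"
proof (induction m)
  case 0 then show ?case by simp
next
  case (Suc m) then show ?case using hC_cnt[OF lev_T_mem] by (auto intro!: countable_UN)
qed

lemma T_countable: "countable T"
  unfolding TL using lev_countable by auto

lemma lev_union: "\<Union> (L m) = X"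
proof (induction m)
  case 0 then show ?case by simp
next
  case (Suc m)
  have "\<Union> (L (Suc m)) = (\<Union>I\<in>L m. \<Union> (C I))" by auto
  also have "\<dots> = (\<Union>I\<in>L m. I)"
  proof (rule SUP_cong)
    fix I assume "I \<in> L m" then show "\<Union> (C I) = I" by (rule hC_un[OF lev_T_mem])
  qed simp
  finally show ?case using Suc by simp
qed

lemma lev_disj: "disjoint (L m)"
proof (induction m)
  case 0 then show ?case by (simp add: disjoint_def)
next
  case (Suc m)
  show ?case unfolding disjoint_def
  proof (intro ballI impI)
    fix J J' assume J: "J \<in> L (Suc m)" "J' \<in> L (Suc m)" "J \<noteq> J'"
    then obtain I I' where I: "I \<in> L m" "J \<in> C I" "I' \<in> L m" "J' \<in> C I'" by auto
    show "J \<inter> J' = {}"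
    proof (rule ccontr)
      assume ne: "J \<inter> J' \<noteq> {}"
      have "J \<subseteq> I" "J' \<subseteq> I'" using I hC_le[OF lev_T_mem] by blast+
      then have "I \<inter> I' \<noteq> {}" using ne by blast
      then have "I = I'" using Suc I unfolding disjoint_def by blast
      have "disjoint (C I)" using I hC_disj[OF lev_T_mem] by blast
      then show False using I J ne \<open>I = I'\<close> unfolding disjoint_def by blast
    qed
  qed
qed

lemma lev_same: "I \<in> L m \<Longrightarrow> J \<in> L m \<Longrightarrow> x \<in> I \<Longrightarrow> x \<in> J \<Longrightarrow> I = J"
  using lev_disj[of m] unfolding disjoint_def by blast

lemma lev_anc: "k \<le> m \<Longrightarrow> J \<in> L m \<Longrightarrow> \<exists>I\<in>L k. J \<subseteq> I"
proof (induction m arbitrary: J rule: dec_induct)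
  case base then show ?case by auto
next
  case (step m)
  from step.prems obtain I where I: "I \<in> L m" "J \<in> C I" by auto
  then have "J \<subseteq> I" using hC_le[OF lev_T_mem] by blast
  moreover obtain I' where "I' \<in> L k" "I \<subseteq> I'" using step.IH I by blast
  ultimately show ?case by blast
qed

lemma maximal_family:
  fixes good :: "'a set \<Rightarrow> bool"
  shows "\<exists>Fam. countable Fam \<and> Fam \<subseteq> {I\<in>T. good I} \<and> disjoint Fam \<and> \<Union>Fam = \<Union>{I\<in>T. good I}"
proof -
  define P where "P = {(m, I). I \<in> L m \<and> good I \<and> (\<forall>k<m. \<forall>J\<in>L k. I \<subseteq> J \<longrightarrow> \<not> good J)}"
  define Fam where "Fam = snd ` P"
  have "P \<subseteq> Sigma UNIV L" unfolding P_def by auto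
  moreover have "countable (Sigma UNIV L)" using lev_countable by (intro countable_SIGMA) auto
  ultimately have "countable P" by (rule countable_subset)
  then have c: "countable Fam" unfolding Fam_def by auto
  have sub: "Fam \<subseteq> {I\<in>T. good I}" unfolding Fam_def P_def using lev_T_mem by auto
  have key: "I = I'" if a: "(m, I) \<in> P" "(m', I') \<in> P" "x \<in> I" "x \<in> I'" "m \<le> m'" for m m' I I' x
  proof -
    obtain J where J: "J \<in> L m" "I' \<subseteq> J" using lev_anc[OF a(5)] a(2) unfolding P_def by blast
    then have "J = I" using lev_same[of J m I x] a unfolding P_def by auto
    show ?thesis
    proof (cases "m < m'")
      case True then show ?thesis using a(1,2) J \<open>J = I\<close> unfolding P_def by auto
    next
      case False then have "m = m'" using a by auto
      then show ?thesis using lev_same[of I m I' x] a unfolding P_def by auto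
    qed
  qed
  have d: "disjoint Fam" unfolding disjoint_def
  proof (intro ballI impI)
    fix I I' assume I: "I \<in> Fam" "I' \<in> Fam" "I \<noteq> I'"
    obtain p where p: "p \<in> P" "I = snd p" using I(1) unfolding Fam_def by blast
    obtain p' where p': "p' \<in> P" "I' = snd p'" using I(2) unfolding Fam_def by blast
    obtain m where m1: "(m, I) \<in> P" using p by (cases p) auto
    obtain m' where m2: "(m', I') \<in> P" using p' by (cases p') auto
    note mm = m1 m2
    show "I \<inter> I' = {}"
    proof (rule ccontr)
      assume "I \<inter> I' \<noteq> {}" then obtain x where "x \<in> I" "x \<in> I'" by auto
      then show False
      proof (cases "m \<le> m'")
        case True then show False using key[OF mm] I(3) \<open>x \<in> I\<close> \<open>x \<in> I'\<close> by blast
      next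
        case False then show False using key[OF mm(2,1)] I(3) \<open>x \<in> I\<close> \<open>x \<in> I'\<close> by simp
      qed
    qed
  qed
  have u: "\<Union>Fam = \<Union>{I\<in>T. good I}"
  proof (intro equalityI subsetI)
    fix x assume "x \<in> \<Union>Fam" then show "x \<in> \<Union>{I\<in>T. good I}" using sub by blast
  next
    fix x assume "x \<in> \<Union>{I\<in>T. good I}"
    then obtain I where I1: "I \<in> T" "good I" "x \<in> I" by blast
    then obtain m where "I \<in> L m" unfolding TL by blast
    note I = this I1(2,3)
    define m0 where "m0 = (LEAST m. \<exists>I\<in>L m. good I \<and> x \<in> I)"
    have ex: "\<exists>I\<in>L m0. good I \<and> x \<in> I" unfolding m0_def by (rule LeastI[of _ m]) (use I in blast)
    then obtain I0 where I0: "I0 \<in> L m0" "good I0" "x \<in> I0" by auto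
    have "\<forall>k<m0. \<forall>J\<in>L k. I0 \<subseteq> J \<longrightarrow> \<not> good J"
    proof (intro allI impI ballI notI)
      fix k J assume k: "k < m0" "J \<in> L k" "I0 \<subseteq> J" "good J"
      then have "\<exists>I\<in>L k. good I \<and> x \<in> I" using I0 by auto
      then have "m0 \<le> k" unfolding m0_def by (rule Least_le[of "\<lambda>m. \<exists>I\<in>L m. good I \<and> x \<in> I" k])
      then show False using k by simp
    qed
    then have "(m0, I0) \<in> P" unfolding P_def using I0 by blast
    then have "I0 \<in> Fam" unfolding Fam_def by (metis image_eqI snd_conv)
    then show "x \<in> \<Union>Fam" using I0 by blast
  qed
  show ?thesis by (intro exI[of _ Fam] conjI c sub d u)
qed

end


lemma pw_ineq:
  fixes f h d q :: real
  assumes f: "0 \<le> f" "f \<le> h" and d: "0 < d" "d < 1" and q: "0 < q" "q < 1"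
  shows "(h - f) powr q \<le> d powr q * h powr q + (h powr q - f powr q) / (1 - (1 - d) powr q)"
proof -
  have "(1 - d) powr q < 1 powr q" using d q by (intro powr_less_mono2) auto
  then have c: "(1 - d) powr q < 1" by simp
  define c where "c = 1 - (1 - d) powr q"
  have c0: "0 < c" using c unfolding c_def by simp
  have fq: "f powr q \<le> h powr q" using f q by (intro powr_mono2) auto
  have A: "0 \<le> d powr q * h powr q" by simp
  have B: "0 \<le> (h powr q - f powr q) / c" using fq c0 by simp
  note B' = B[unfolded c_def]
  show ?thesis
  proof (cases "(1 - d) * h \<le> f")
    case True
    then have "h - f \<le> d * h" by (simp add: algebra_simps)
    then have "(h - f) powr q \<le> (d * h) powr q" using f q by (intro powr_mono2) auto
    also have "\<dots> = d powr q * h powr q" using d f by (simp add: powr_mult)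
    finally show ?thesis using B' by linarith
  next
    case False
    then have "f powr q \<le> ((1 - d) * h) powr q" using f q by (intro powr_mono2) auto
    also have "\<dots> = (1 - d) powr q * h powr q" using d f by (simp add: powr_mult)
    finally have "c * h powr q \<le> h powr q - f powr q" unfolding c_def by (simp add: algebra_simps)
    then have "h powr q \<le> (h powr q - f powr q) / c" using c0 by (simp add: field_simps)
    then have "h powr q \<le> (h powr q - f powr q) / (1 - (1 - d) powr q)" unfolding c_def .
    moreover have "(h - f) powr q \<le> h powr q" using f q by (intro powr_mono2) auto
    ultimately show ?thesis using A by linarith
  qed
qed

lemma epowr_gt:
  assumes q: "0 < q" and s: "0 \<le> s"
  shows "(ennreal s < epowr a q) \<longleftrightarrow> (ennreal (s powr (1/q)) < a)"
proof (cases a)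
  case (real r)
  have "s < r powr q \<longleftrightarrow> s powr (1/q) < r"
  proof
    assume "s < r powr q"
    then have "s powr (1/q) < (r powr q) powr (1/q)" using s q by (intro powr_less_mono2) auto
    also have "\<dots> = r" using real q by (simp add: powr_powr)
    finally show "s powr (1/q) < r" .
  next
    assume "s powr (1/q) < r"
    then have "(s powr (1/q)) powr q < r powr q" using s q by (intro powr_less_mono2) auto
    also have "(s powr (1/q)) powr q = s" using s q by (simp add: powr_powr)
    finally show "s < r powr q" .
  qed
  then show ?thesis using real s unfolding epowr_def by (simp add: ennreal_less_iff)
next
  case top then show ?thesis unfolding epowr_def by simp
qed



locale S = prob_space M for M :: "'a measure" +
  fixes T :: "'a set set" and g :: "real \<Rightarrow> real"
  assumes na: "nonatomic M" and tree: "is_tree M T"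
    and g0: "\<forall>t\<in>{0<..1}. 0 \<le> g t" and gi: "set_integrable lborel {0<..1} g"
    and gm: "\<forall>s t. 0 < s \<longrightarrow> s \<le> t \<longrightarrow> t \<le> 1 \<longrightarrow> g t \<le> g s"
begin

definition "gg s = indicator {0<..1::real} s * g s"
definition "Gi t = (LBINT s:{0<..t}. g s)"
definition "G t = (\<integral>\<^sup>+s\<in>{0<..t}. ennreal (gg s) \<partial>lborel)"

lemma gg_meas[measurable]: "gg \<in> borel_measurable borel"
proof -
  have "integrable lborel (\<lambda>s. indicator {0<..1::real} s *\<^sub>R g s)"
    using gi unfolding set_integrable_def .
  then have "(\<lambda>s. indicator {0<..1::real} s *\<^sub>R g s) \<in> borel_measurable lborel" by auto
  then show ?thesis unfolding gg_def by simp
qed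

lemma gg_nonneg: "0 \<le> gg s" using g0 unfolding gg_def by (auto simp: indicator_def)

lemma gg_eq: "0 < s \<Longrightarrow> s \<le> 1 \<Longrightarrow> gg s = g s" unfolding gg_def by simp

lemma G_eq:
  assumes t: "0 < t" "t \<le> 1"
  shows "G t = ennreal (Gi t)" and "0 \<le> Gi t"
proof -
  have si: "set_integrable lborel {0<..t} g" using t by (intro set_integrable_subset[OF gi]) auto
  then have int: "integrable lborel (\<lambda>s. indicator {0<..t} s *\<^sub>R g s)" unfolding set_integrable_def .
  have nn: "AE s in lborel. 0 \<le> indicator {0<..t} s *\<^sub>R g s" using g0 t by (auto simp: indicator_def)
  have "G t = (\<integral>\<^sup>+s. ennreal (indicator {0<..t} s *\<^sub>R g s) \<partial>lborel)"
    unfolding G_def using t by (intro nn_integral_cong) (auto simp: indicator_def gg_def)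
  also have "\<dots> = ennreal (Gi t)" unfolding Gi_def set_lebesgue_integral_def
    by (rule nn_integral_eq_integral[OF int nn])
  finally show "G t = ennreal (Gi t)" .
  show "0 \<le> Gi t" unfolding Gi_def set_lebesgue_integral_def by (rule integral_nonneg_AE[OF nn])
qed

lemma avg_eq: "avg g t = Gi t / t" unfolding avg_def Gi_def by simp

lemma avg_nonneg: "0 < t \<Longrightarrow> t \<le> 1 \<Longrightarrow> 0 \<le> avg g t"
  using G_eq(2) unfolding avg_eq by simp

lemma avg_core:
  assumes t: "0 < t" "t \<le> u" "u \<le> 1"
  shows "t * Gi u \<le> u * Gi t"
proof -
  have u0: "0 < u" using t by simp
  define R where "R = (\<integral>\<^sup>+s\<in>{t<..u}. ennreal (gg s) \<partial>lborel)"
  have split: "G u = G t + R" unfolding G_def R_def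
  proof -
    have "{0<..u} = {0<..t} \<union> {t<..u}" using t by auto
    then show "(\<integral>\<^sup>+s\<in>{0<..u}. ennreal (gg s) \<partial>lborel) =
      (\<integral>\<^sup>+s\<in>{0<..t}. ennreal (gg s) \<partial>lborel) + (\<integral>\<^sup>+s\<in>{t<..u}. ennreal (gg s) \<partial>lborel)"
      by (simp add: nn_integral_disjoint_pair)
  qed
  have Rle: "R \<le> ennreal ((u - t) * g t)"
  proof -
    have "R \<le> (\<integral>\<^sup>+s. ennreal (g t) * indicator {t<..u} s \<partial>lborel)"
      unfolding R_def
    proof (intro nn_integral_mono)
      fix s show "ennreal (gg s) * indicator {t<..u} s \<le> ennreal (g t) * indicator {t<..u} s"
        using gm t by (auto simp: indicator_def gg_def intro!: ennreal_leI)
    qed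
    also have "\<dots> = ennreal (g t) * ennreal (u - t)" using t by (simp add: nn_integral_cmult_indicator)
    also have "\<dots> = ennreal ((u - t) * g t)" using g0 t by (simp add: ennreal_mult mult.commute)
    finally show ?thesis .
  qed
  have Gle: "ennreal (t * g t) \<le> G t"
  proof -
    have "(\<integral>\<^sup>+s. ennreal (g t) * indicator {0<..t} s \<partial>lborel) \<le> G t"
      unfolding G_def
    proof (intro nn_integral_mono)
      fix s show "ennreal (g t) * indicator {0<..t} s \<le> ennreal (gg s) * indicator {0<..t} s"
        using gm t by (auto simp: indicator_def gg_def intro!: ennreal_leI)
    qed
    moreover have "(\<integral>\<^sup>+s. ennreal (g t) * indicator {0<..t} s \<partial>lborel) = ennreal (t * g t)"
      using t g0 by (simp add: nn_integral_cmult_indicator ennreal_mult mult.commute)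
    ultimately show ?thesis by simp
  qed
  have Rfin: "R \<noteq> \<top>" using Rle by (auto simp: top_unique)
  then obtain r where r: "R = ennreal r" "0 \<le> r" by (cases R) auto
  have Gt: "G t = ennreal (Gi t)" "0 \<le> Gi t" using G_eq t by auto
  have Gu: "G u = ennreal (Gi u)" "0 \<le> Gi u" using G_eq[of u] t by auto
  have "ennreal (Gi u) = ennreal (Gi t + r)" using split Gt Gu r by (simp add: ennreal_plus)
  then have e1: "Gi u = Gi t + r" using Gu Gt r by (subst (asm) ennreal_inj) auto
  have e2: "r \<le> (u - t) * g t" using Rle r g0 t by (simp add: ennreal_le_iff)
  have e3: "t * g t \<le> Gi t" using Gle Gt by (simp add: ennreal_le_iff)
  have "t * Gi u = t * Gi t + t * r" using e1 by (simp add: algebra_simps)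
  also have "\<dots> \<le> t * Gi t + t * ((u - t) * g t)" using e2 t by (intro add_left_mono mult_left_mono) auto
  also have "\<dots> = t * Gi t + (u - t) * (t * g t)" by (simp add: algebra_simps)
  also have "\<dots> \<le> t * Gi t + (u - t) * Gi t" using e3 t by (intro add_left_mono mult_left_mono) auto
  also have "\<dots> = u * Gi t" by (simp add: algebra_simps)
  finally show ?thesis .
qed

lemma avg_mono:
  assumes t: "0 < t" "t \<le> u" "u \<le> 1"
  shows "avg g u \<le> avg g t"
proof -
  have "t * Gi u \<le> u * Gi t" by (rule avg_core[OF t])
  then show ?thesis unfolding avg_eq using t by (simp add: divide_simps mult.commute)
qed

lemma tree_C: "\<exists>C. treeC T C (space M)"
proof -
  from tree obtain C where C: "\<forall>I\<in>T. C I \<subseteq> T \<and> countable (C I) \<and>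
              (\<exists>J K. J \<in> C I \<and> K \<in> C I \<and> J \<noteq> K) \<and>
              disjoint (C I) \<and> (\<forall>J\<in>C I. J \<subseteq> I) \<and> \<Union> (C I) = I"
     "T = (\<Union>m. tree_level C (space M) m)"
    unfolding is_tree_def by blast
  have X: "space M \<in> T" using tree unfolding is_tree_def by blast
  have "treeC T C (space M)"
  proof (rule treeC.intro)
    show "space M \<in> T" by (rule X)
    show "T = (\<Union>m. tree_level C (space M) m)" by (rule C(2))
    fix I assume "I \<in> T"
    then show "C I \<subseteq> T \<and> countable (C I) \<and> disjoint (C I) \<and> (\<forall>J\<in>C I. J \<subseteq> I) \<and> \<Union> (C I) = I"
      using C(1) by blast
  qed
  then show ?thesis by blast
qed

lemma T_sets: "I \<in> T \<Longrightarrow> I \<in> events" using tree unfolding is_tree_def by blast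
lemma T_pos: "I \<in> T \<Longrightarrow> 0 < prob I" using tree unfolding is_tree_def by blast
lemma T_cnt: "countable T" using tree_C treeC.T_countable by blast

definition "cI \<phi> I = ennreal (1 / measure M I) * (\<integral>\<^sup>+ y\<in>I. ennreal \<bar>\<phi> y\<bar> \<partial>M)"

lemma dm_eq: "dyadic_max M T \<phi> x = (SUP I\<in>T. cI \<phi> I * indicator I x)"
  unfolding dyadic_max_def cI_def[symmetric]
proof (rule antisym)
  show "(SUP I\<in>{I \<in> T. x \<in> I}. cI \<phi> I) \<le> (SUP I\<in>T. cI \<phi> I * indicator I x)"
  proof (rule SUP_least)
    fix I assume I: "I \<in> {I \<in> T. x \<in> I}"
    then have "cI \<phi> I = cI \<phi> I * indicator I x" by simp
    also have "\<dots> \<le> (SUP I\<in>T. cI \<phi> I * indicator I x)" using I by (intro SUP_upper) auto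
    finally show "cI \<phi> I \<le> (SUP I\<in>T. cI \<phi> I * indicator I x)" .
  qed
  show "(SUP I\<in>T. cI \<phi> I * indicator I x) \<le> (SUP I\<in>{I \<in> T. x \<in> I}. cI \<phi> I)"
  proof (rule SUP_least)
    fix I assume I: "I \<in> T"
    show "cI \<phi> I * indicator I x \<le> (SUP I\<in>{I \<in> T. x \<in> I}. cI \<phi> I)"
    proof (cases "x \<in> I")
      case True then show ?thesis using I by (simp, intro SUP_upper) auto
    qed simp
  qed
qed

lemma dm_meas[measurable]: "dyadic_max M T \<phi> \<in> borel_measurable M"
proof -
  have "(\<lambda>x. SUP I\<in>T. cI \<phi> I * indicator I x) \<in> borel_measurable M"
    using T_cnt T_sets by (intro borel_measurable_SUP) auto
  then show ?thesis unfolding dm_eq[abs_def] .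
qed

lemma intE:
  assumes phim[measurable]: "\<phi> \<in> borel_measurable M" and phi0: "\<forall>x\<in>space M. 0 \<le> \<phi> x"
    and hr: "\<forall>t\<in>{0<..1}. rearr M (\<lambda>x. ennreal (\<phi> x)) t = ennreal (g t)"
    and E[measurable]: "E \<in> events" and Ep: "0 < prob E"
  shows "(\<integral>\<^sup>+x\<in>E. ennreal (\<phi> x) \<partial>M) \<le> G (prob E)"
  unfolding G_def
proof (rule layer_compare)
  show "sigma_finite_measure M" by (rule sigma_finite_measure_axioms)
  show "sigma_finite_measure lborel" by (rule lborel.sigma_finite_measure_axioms)
  show "(\<lambda>x. ennreal (\<phi> x) * indicator E x) \<in> borel_measurable M" by measurable
  show "(\<lambda>x. ennreal (gg x) * indicator {0<..prob E} x) \<in> borel_measurable lborel" by simp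
  fix s :: real assume s: "0 \<le> s"
  define S where "S = {x \<in> space M. ennreal s < ennreal (\<phi> x) * indicator E x}"
  define S' where "S' = {x \<in> space M. ennreal s < ennreal (\<phi> x)}"
  define R where "R = {x \<in> space lborel. ennreal s < ennreal (gg x) * indicator {0<..prob E} x}"
  have Sev: "S \<in> events" unfolding S_def by measurable
  have S'ev: "S' \<in> events" unfolding S'_def by measurable
  have Rs: "R \<in> sets lborel" unfolding R_def by measurable
  have SE: "S \<subseteq> E" unfolding S_def by (auto simp: indicator_def)
  have SS': "S \<subseteq> S'" unfolding S_def S'_def by (auto simp: indicator_def)
  define a where "a = min (prob E) (prob S')"
  have a0: "0 \<le> a" unfolding a_def by simp
  have sub: "{0<..<a} \<subseteq> R"
  proof
    fix t assume t: "t \<in> {0<..<a}"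
    then have t1: "t < prob S'" "t < prob E" "0 < t" unfolding a_def by auto
    have "t \<le> 1" using t1 prob_le_1[of E] by linarith
    have "ennreal s < rearr M (\<lambda>x. ennreal (\<phi> x)) t"
      using super_core[OF na _ t1(3), of "\<lambda>x. ennreal (\<phi> x)" "ennreal s"] t1(1) unfolding S'_def by auto
    also have "\<dots> = ennreal (g t)" using hr t1 \<open>t \<le> 1\<close> by auto
    finally show "t \<in> R" unfolding R_def using t1 \<open>t \<le> 1\<close> by (auto simp: gg_eq)
  qed
  have "emeasure M S = ennreal (prob S)" by (simp add: emeasure_eq_measure)
  also have "\<dots> \<le> ennreal a"
  proof (intro ennreal_leI)
    have "prob S \<le> prob E" using SE by (intro finite_measure_mono) auto
    moreover have "prob S \<le> prob S'" using SS' S'ev by (intro finite_measure_mono) auto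
    ultimately show "prob S \<le> a" unfolding a_def by simp
  qed
  also have "\<dots> = emeasure lborel {0<..<a}" using a0 by simp
  also have "\<dots> \<le> emeasure lborel R" using sub Rs by (intro emeasure_mono) auto
  finally show "emeasure M {x \<in> space M. ennreal s < ennreal (\<phi> x) * indicator E x}
     \<le> emeasure lborel {x \<in> space lborel. ennreal s < ennreal (gg x) * indicator {0<..prob E} x}"
    unfolding S_def R_def .
qed

lemma rearr_bound:
  assumes phim[measurable]: "\<phi> \<in> borel_measurable M" and phi0: "\<forall>x\<in>space M. 0 \<le> \<phi> x"
    and hr: "\<forall>t\<in>{0<..1}. rearr M (\<lambda>x. ennreal (\<phi> x)) t = ennreal (g t)"
    and t: "0 < t" "t \<le> 1"
  shows "rearr M (dyadic_max M T \<phi>) t \<le> ennreal (avg g t)"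
  unfolding rearr_def
proof (rule SUP_least)
  fix e assume e: "e \<in> {e \<in> events. prob e = t}"
  show "(INF x\<in>e. dyadic_max M T \<phi> x) \<le> ennreal (avg g t)"
  proof (rule ccontr)
    assume "\<not> ?thesis"
    then have lt: "ennreal (avg g t) < (INF x\<in>e. dyadic_max M T \<phi> x)" by (simp add: not_le)
    have av0: "0 \<le> avg g t" using avg_nonneg t by auto
    obtain l where l: "avg g t < l" "ennreal l < (INF x\<in>e. dyadic_max M T \<phi> x)"
    proof (cases "(INF x\<in>e. dyadic_max M T \<phi> x)")
      case (real r)
      then have "avg g t < r" using lt av0 by (simp add: ennreal_less_iff)
      then show ?thesis using that[of "(avg g t + r) / 2"] real av0 by (simp add: ennreal_less_iff)
    next
      case top then show ?thesis using that[of "avg g t + 1"] by simp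
    qed
    have l0: "0 < l" using l av0 by simp
    obtain C where C: "treeC T C (space M)" using tree_C by blast
    define good where "good I \<longleftrightarrow> ennreal l < cI \<phi> I" for I
    obtain Fam where Fam: "countable Fam" "Fam \<subseteq> {I\<in>T. good I}" "disjoint Fam" "\<Union>Fam = \<Union>{I\<in>T. good I}"
      using treeC.maximal_family[OF C, of good] by blast
    define E where "E = \<Union>Fam"
    have Fev: "I \<in> events" if "I \<in> Fam" for I using Fam(2) that T_sets by blast
    have Eev: "E \<in> events" unfolding E_def using Fam(1) Fev by (intro sets.countable_Union) auto
    have eE: "e \<subseteq> E"
    proof
      fix x assume x: "x \<in> e"
      have "ennreal l < dyadic_max M T \<phi> x" using l(2) x by (meson INF_lower less_le_trans)
      then obtain I where "I \<in> {I\<in>T. x \<in> I}" "ennreal l < cI \<phi> I"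
        unfolding dyadic_max_def cI_def[symmetric] by (auto simp: less_SUP_iff)
      then show "x \<in> E" unfolding E_def Fam(4) good_def by blast
    qed
    have tE: "t \<le> prob E" using e eE Eev by (auto intro: finite_measure_mono)
    have Ep: "0 < prob E" using t tE by simp
    have E1: "prob E \<le> 1" by simp
    have dfam: "disjoint_family_on (\<lambda>I. I) Fam"
      using Fam(3) unfolding disjoint_family_on_def disjoint_def by blast
    define N where "N = density M (\<lambda>x. ennreal (\<phi> x))"
    have emN: "emeasure N A = (\<integral>\<^sup>+x\<in>A. ennreal (\<phi> x) \<partial>M)" if "A \<in> events" for A
      unfolding N_def using that by (simp add: emeasure_density)
    have sN: "sets N = events" unfolding N_def by simp
    have emE: "emeasure M E = (\<integral>\<^sup>+I. emeasure M I \<partial>count_space Fam)"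
      unfolding E_def using emeasure_UN_countable[of Fam "\<lambda>I. I" M, OF Fev Fam(1) dfam] by simp
    have emNE: "emeasure N E = (\<integral>\<^sup>+I. emeasure N I \<partial>count_space Fam)"
      unfolding E_def using emeasure_UN_countable[of Fam "\<lambda>I. I" N, OF _ Fam(1) dfam] Fev sN by simp
    have each: "ennreal l * emeasure M I \<le> emeasure N I" if I: "I \<in> Fam" for I
    proof -
      have IT: "I \<in> T" and gI: "good I" using I Fam(2) by auto
      have pI: "0 < prob I" using T_pos IT by blast
      define X where "X = (\<integral>\<^sup>+ y\<in>I. ennreal \<bar>\<phi> y\<bar> \<partial>M)"
      have XN: "X = emeasure N I" unfolding X_def emN[OF Fev[OF I]]
        using phi0 by (intro nn_integral_cong) auto
      have inv: "ennreal (1 / prob I) * ennreal (prob I) = 1"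
        using pI by (simp add: ennreal_mult[symmetric])
      have "ennreal l * emeasure M I = ennreal l * ennreal (prob I)" by (simp add: emeasure_eq_measure)
      also have "\<dots> \<le> (ennreal (1 / prob I) * X) * ennreal (prob I)"
        using gI unfolding good_def cI_def X_def by (intro mult_right_mono) auto
      also have "\<dots> = X" using inv by (simp add: ac_simps)
      finally show ?thesis using XN by simp
    qed
    have "ennreal (l * prob E) = ennreal l * emeasure M E"
      using l0 by (simp add: ennreal_mult emeasure_eq_measure)
    also have "\<dots> = (\<integral>\<^sup>+I. ennreal l * emeasure M I \<partial>count_space Fam)"
      unfolding emE by (subst nn_integral_cmult) auto
    also have "\<dots> \<le> (\<integral>\<^sup>+I. emeasure N I \<partial>count_space Fam)"
      using each by (intro nn_integral_mono) auto
    also have "\<dots> = (\<integral>\<^sup>+x\<in>E. ennreal (\<phi> x) \<partial>M)" using emNE emN[OF Eev] by simp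
    also have "\<dots> \<le> G (prob E)" by (rule intE[OF phim phi0 hr Eev Ep])
    also have "\<dots> = ennreal (Gi (prob E))" using G_eq Ep E1 by auto
    finally have c1: "l * prob E \<le> Gi (prob E)" using G_eq(2)[OF Ep E1] by (simp add: ennreal_le_iff)
    have c2: "t * Gi (prob E) \<le> prob E * Gi t" by (rule avg_core[OF t(1) tE E1])
    have "t * (l * prob E) \<le> t * Gi (prob E)" using c1 t by (intro mult_left_mono) auto
    then have "prob E * (l * t) \<le> prob E * Gi t" using c2 by (simp add: algebra_simps)
    then have "l * t \<le> Gi t" using Ep by simp
    then have "l \<le> avg g t" unfolding avg_eq using t by (simp add: field_simps)
    then show False using l(1) by simp
  qed
qed

end


context S begin

definition "R \<phi> t = enn2real (rearr M (dyadic_max M T \<phi>) t)"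
definition "Rf \<phi> t = indicator {0<..1::real} t * R \<phi> t"
definition "hf t = indicator {0<..1::real} t * avg g t"

context
  fixes \<phi> :: "'a \<Rightarrow> real"
  assumes phim[measurable]: "\<phi> \<in> borel_measurable M" and phi0: "\<forall>x\<in>space M. 0 \<le> \<phi> x"
    and hr: "\<forall>t\<in>{0<..1}. rearr M (\<lambda>x. ennreal (\<phi> x)) t = ennreal (g t)"
begin

lemma R_fin:
  assumes t: "0 < t" "t \<le> 1"
  shows "rearr M (dyadic_max M T \<phi>) t = ennreal (R \<phi> t)" "0 \<le> R \<phi> t" "R \<phi> t \<le> avg g t"
proof -
  have b: "rearr M (dyadic_max M T \<phi>) t \<le> ennreal (avg g t)" by (rule rearr_bound[OF phim phi0 hr t])
  then have nt: "rearr M (dyadic_max M T \<phi>) t \<noteq> \<top>" by (auto simp: top_unique)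
  then show "rearr M (dyadic_max M T \<phi>) t = ennreal (R \<phi> t)" unfolding R_def
    by (simp add: less_top[symmetric])
  show "0 \<le> R \<phi> t" unfolding R_def by simp
  have "R \<phi> t \<le> enn2real (ennreal (avg g t))" unfolding R_def using b by (intro enn2real_mono) auto
  then show "R \<phi> t \<le> avg g t" using avg_nonneg[OF t] by simp
qed

lemma Rf_meas[measurable]: "Rf \<phi> \<in> borel_measurable borel"
proof -
  have "mono_on {0<..1} (\<lambda>t. - R \<phi> t)"
  proof (rule mono_onI)
    fix t u :: real assume tu: "t \<in> {0<..1}" "u \<in> {0<..1}" "t \<le> u"
    have "rearr M (dyadic_max M T \<phi>) u \<le> rearr M (dyadic_max M T \<phi>) t"
      using tu by (intro rearr_antitone[OF na]) auto
    then have "R \<phi> u \<le> R \<phi> t" using R_fin(1)[of u] R_fin(1)[of t] R_fin(2)[of t] tu by (simp add: ennreal_le_iff)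
    then show "- R \<phi> t \<le> - R \<phi> u" by simp
  qed
  then have "(\<lambda>t. - R \<phi> t) \<in> borel_measurable (restrict_space borel {0<..1})"
    by (rule borel_measurable_mono_on_fnc)
  then have "(\<lambda>t. - (- R \<phi> t)) \<in> borel_measurable (restrict_space borel {0<..1})"
    by (rule borel_measurable_uminus)
  then have "R \<phi> \<in> borel_measurable (restrict_space borel {0<..1})" by simp
  then have "(\<lambda>t. indicator {0<..1::real} t *\<^sub>R R \<phi> t) \<in> borel_measurable borel"
    by (subst (asm) borel_measurable_restrict_space_iff) auto
  then show ?thesis unfolding Rf_def[abs_def] by simp
qed

lemma lower:
  assumes q: "0 < q"
  shows "(\<integral>\<^sup>+x. epowr (dyadic_max M T \<phi> x) q \<partial>M)
     \<le> (\<integral>\<^sup>+t. ennreal (Rf \<phi> t powr q) * indicator {0<..1} t \<partial>lborel)"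
proof (rule layer_compare)
  show "sigma_finite_measure M" by (rule sigma_finite_measure_axioms)
  show "sigma_finite_measure lborel" by (rule lborel.sigma_finite_measure_axioms)
  show "(\<lambda>x. epowr (dyadic_max M T \<phi> x) q) \<in> borel_measurable M" unfolding epowr_def by measurable
  show "(\<lambda>t. ennreal (Rf \<phi> t powr q) * indicator {0<..1} t) \<in> borel_measurable lborel" by simp
  fix s :: real assume s: "0 \<le> s"
  define S where "S = {x \<in> space M. ennreal (s powr (1/q)) < dyadic_max M T \<phi> x}"
  define Rs where "Rs = {t \<in> space lborel. ennreal s < ennreal (Rf \<phi> t powr q) * indicator {0<..1} t}"
  have Sev: "S \<in> events" unfolding S_def by measurable
  have Rsm: "Rs \<in> sets lborel" unfolding Rs_def by measurable
  have eqS: "{x \<in> space M. ennreal s < epowr (dyadic_max M T \<phi> x) q} = S"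
    unfolding S_def using epowr_gt[OF q s] by auto
  have sub: "{0<..<prob S} \<subseteq> Rs"
  proof
    fix t assume t: "t \<in> {0<..<prob S}"
    have p1: "prob S \<le> 1" by simp
    have "t < prob S" using t by simp
    then have t1: "t \<le> 1" using p1 by linarith
    have "ennreal (s powr (1/q)) < rearr M (dyadic_max M T \<phi>) t"
      using super_core[OF na dm_meas, of t "ennreal (s powr (1/q))"] t unfolding S_def by auto
    then have "ennreal (s powr (1/q)) < ennreal (R \<phi> t)" using R_fin(1)[of t] t t1 by simp
    then have "ennreal s < epowr (ennreal (R \<phi> t)) q" using epowr_gt[OF q s] by simp
    then have "ennreal s < ennreal (R \<phi> t powr q)" using R_fin(2)[of t] t t1 unfolding epowr_def by simp
    then show "t \<in> Rs" unfolding Rs_def Rf_def using t t1 by auto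
  qed
  have "emeasure M S = ennreal (prob S)" by (simp add: emeasure_eq_measure)
  also have "\<dots> = emeasure lborel {0<..<prob S}" by simp
  also have "\<dots> \<le> emeasure lborel Rs" using sub Rsm by (intro emeasure_mono) auto
  finally show "emeasure M {x \<in> space M. ennreal s < epowr (dyadic_max M T \<phi> x) q}
    \<le> emeasure lborel {t \<in> space lborel. ennreal s < ennreal (Rf \<phi> t powr q) * indicator {0<..1} t}"
    unfolding eqS Rs_def[symmetric] .
qed

end

lemma hf_meas[measurable]: "hf \<in> borel_measurable borel"
proof -
  have "mono_on {0<..1} (\<lambda>t. - avg g t)"
    by (rule mono_onI) (use avg_mono in auto)
  then have "(\<lambda>t. - avg g t) \<in> borel_measurable (restrict_space borel {0<..1})"
    by (rule borel_measurable_mono_on_fnc)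
  then have "(\<lambda>t. - (- avg g t)) \<in> borel_measurable (restrict_space borel {0<..1})"
    by (rule borel_measurable_uminus)
  then have "avg g \<in> borel_measurable (restrict_space borel {0<..1})" by simp
  then have "(\<lambda>t. indicator {0<..1::real} t *\<^sub>R avg g t) \<in> borel_measurable borel"
    by (subst (asm) borel_measurable_restrict_space_iff) auto
  then show ?thesis unfolding hf_def[abs_def] by simp
qed

lemma main_conv:
  fixes q :: real and \<phi> :: "nat \<Rightarrow> 'a \<Rightarrow> real"
  assumes q: "0 < q" "q < 1"
    and Hfin: "(\<integral>\<^sup>+ t\<in>{0<..1}. ennreal (avg g t powr q) \<partial>lborel) < \<infinity>"
    and phim: "\<forall>n. \<phi> n \<in> borel_measurable M" and phi0: "\<forall>n. \<forall>x\<in>space M. 0 \<le> \<phi> n x"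
    and hr: "\<forall>n. \<forall>t\<in>{0<..1}. rearr M (\<lambda>x. ennreal (\<phi> n x)) t = ennreal (g t)"
    and lim: "(\<lambda>n. \<integral>\<^sup>+ x. epowr (dyadic_max M T (\<phi> n) x) q \<partial>M)
           \<longlonglongrightarrow> (\<integral>\<^sup>+ t\<in>{0<..1}. ennreal (avg g t powr q) \<partial>lborel)"
  shows "(\<lambda>n. \<integral>\<^sup>+ t\<in>{0<..1}. epowr (ediff (rearr M (dyadic_max M T (\<phi> n)) t) (avg g t)) q \<partial>lborel)
           \<longlonglongrightarrow> 0"
proof -
  note phm[measurable] = phim[rule_format]
  have p0: "\<And>n. \<forall>x\<in>space M. 0 \<le> \<phi> n x" using phi0 by blast
  have hr2: "\<And>n. \<forall>t\<in>{0<..1}. rearr M (\<lambda>x. ennreal (\<phi> n x)) t = ennreal (g t)" using hr by blast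
  define H where "H = (\<integral>\<^sup>+t. ennreal (hf t powr q) * indicator {0<..1} t \<partial>lborel)"
  have H_eq: "(\<integral>\<^sup>+ t\<in>{0<..1}. ennreal (avg g t powr q) \<partial>lborel) = H"
    unfolding H_def by (intro nn_integral_cong) (auto simp: hf_def indicator_def)
  define a where "a n = (\<integral>\<^sup>+t. ennreal (Rf (\<phi> n) t powr q) * indicator {0<..1} t \<partial>lborel)" for n
  define D where "D n = (\<integral>\<^sup>+t. ennreal (hf t powr q - Rf (\<phi> n) t powr q) * indicator {0<..1} t \<partial>lborel)" for n
  have Rfm[measurable]: "Rf (\<phi> n) \<in> borel_measurable borel" for n
    using Rf_meas[OF phm[of n] p0[of n] hr2[of n]] by blast
  have pt: "0 \<le> Rf (\<phi> n) t \<and> Rf (\<phi> n) t \<le> hf t" for n t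
  proof (cases "t \<in> {0<..1}")
    case True then show ?thesis
      using R_fin[OF phm[of n] p0[of n] hr2[of n], of t] unfolding Rf_def hf_def by auto
  qed (simp add: Rf_def hf_def)
  have ptq: "Rf (\<phi> n) t powr q \<le> hf t powr q" for n t using pt q by (intro powr_mono2) auto
  have aD: "H = a n + D n" for n
  proof -
    have "H = (\<integral>\<^sup>+t. ennreal (Rf (\<phi> n) t powr q) * indicator {0<..1} t
                 + ennreal (hf t powr q - Rf (\<phi> n) t powr q) * indicator {0<..1} t \<partial>lborel)"
      unfolding H_def
    proof (intro nn_integral_cong)
      fix t
      have "ennreal (hf t powr q) = ennreal (Rf (\<phi> n) t powr q) + ennreal (hf t powr q - Rf (\<phi> n) t powr q)"
        using ptq[of n t] by (subst ennreal_plus[symmetric]) auto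
      then show "ennreal (hf t powr q) * indicator {0<..1} t = ennreal (Rf (\<phi> n) t powr q) * indicator {0<..1} t
                 + ennreal (hf t powr q - Rf (\<phi> n) t powr q) * indicator {0<..1} t"
        by (simp add: distrib_right)
    qed
    also have "\<dots> = a n + D n" unfolding a_def D_def by (intro nn_integral_add) auto
    finally show ?thesis .
  qed
  have Hf: "H < \<top>" using Hfin H_eq by simp
  have aH: "a n \<le> H" for n using aD[of n] by simp
  have ba: "(\<integral>\<^sup>+ x. epowr (dyadic_max M T (\<phi> n) x) q \<partial>M) \<le> a n" for n
    unfolding a_def by (rule lower[OF phm[of n] p0[of n] hr2[of n] q(1)])
  have alim: "a \<longlonglongrightarrow> H"
    by (rule tendsto_sandwich[of "\<lambda>n. \<integral>\<^sup>+ x. epowr (dyadic_max M T (\<phi> n) x) q \<partial>M" _ _ "\<lambda>_. H"])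
       (use ba aH lim H_eq in auto)
  define Hr where "Hr = enn2real H"
  have Hr0: "0 \<le> Hr" unfolding Hr_def by simp
  have HHr: "H = ennreal Hr" unfolding Hr_def using Hf by simp
  define dr where "dr n = enn2real (D n)" for n
  have Dle: "D n \<le> H" for n using aD[of n] by simp
  have Dfin: "D n < \<top>" for n using Dle[of n] Hf by (rule le_less_trans)
  have afin: "a n < \<top>" for n using aH[of n] Hf by (rule le_less_trans)
  have DD: "D n = ennreal (dr n)" for n unfolding dr_def using Dfin by simp
  have dr_eq: "dr n = Hr - enn2real (a n)" for n
    unfolding dr_def Hr_def aD[of n] using Dfin afin by (simp add: enn2real_plus)
  have "(\<lambda>n. enn2real (a n)) \<longlonglongrightarrow> Hr" unfolding Hr_def using alim Hf by (intro tendsto_enn2real) auto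
  then have "(\<lambda>n. Hr - enn2real (a n)) \<longlonglongrightarrow> Hr - Hr" by (intro tendsto_diff) auto
  moreover have "dr = (\<lambda>n. Hr - enn2real (a n))" using dr_eq by (simp add: fun_eq_iff)
  ultimately have drlim: "dr \<longlonglongrightarrow> 0" by simp
  define c where "c n = (\<integral>\<^sup>+t. ennreal ((hf t - Rf (\<phi> n) t) powr q) * indicator {0<..1} t \<partial>lborel)" for n
  have c_eq: "(\<integral>\<^sup>+ t\<in>{0<..1}. epowr (ediff (rearr M (dyadic_max M T (\<phi> n)) t) (avg g t)) q \<partial>lborel) = c n" for n
    unfolding c_def
  proof (intro nn_integral_cong)
    fix t
    show "epowr (ediff (rearr M (dyadic_max M T (\<phi> n)) t) (avg g t)) q * indicator {0<..1} t
        = ennreal ((hf t - Rf (\<phi> n) t) powr q) * indicator {0<..1} t"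
    proof (cases "t \<in> {0<..1}")
      case True
      note RR = R_fin[OF phm[of n] p0[of n] hr2[of n], of t]
      have "\<bar>R (\<phi> n) t - avg g t\<bar> = hf t - Rf (\<phi> n) t" using True RR unfolding hf_def Rf_def by auto
      then show ?thesis using True RR unfolding ediff_def epowr_def by simp
    qed simp
  qed
  show ?thesis unfolding c_eq
  proof (rule order_tendstoI)
    fix y :: ennreal assume "y < 0" then show "eventually (\<lambda>n. y < c n) sequentially" by simp
  next
    fix y :: ennreal assume y: "0 < y"
    obtain \<epsilon> where eps: "0 < \<epsilon>" "ennreal \<epsilon> < y"
    proof (cases y)
      case (real r)
      then show ?thesis using that[of "r / 2"] y by (simp add: ennreal_less_iff)
    next
      case top then show ?thesis using that[of 1] by simp
    qed
    define k where "k = \<epsilon> / (2 * (Hr + 1))"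
    have k0: "0 < k" unfolding k_def using eps Hr0 by simp
    define d where "d = min (1/2) (k powr (1/q))"
    have d0: "0 < d" "d < 1" unfolding d_def using k0 by auto
    have "d powr q \<le> (k powr (1/q)) powr q" unfolding d_def using q d0 by (intro powr_mono2) auto
    also have "\<dots> = k" using k0 q by (simp add: powr_powr)
    finally have dk: "d powr q \<le> k" .
    have "k * Hr = (\<epsilon> / 2) * (Hr / (Hr + 1))" unfolding k_def by (simp add: field_simps)
    also have "\<dots> \<le> (\<epsilon> / 2) * 1" using eps Hr0 by (intro mult_left_mono) auto
    finally have kH: "k * Hr \<le> \<epsilon> / 2" by simp
    have dH: "d powr q * Hr \<le> \<epsilon> / 2" using dk Hr0 kH by (meson mult_right_mono order_trans)
    define cc where "cc = 1 - (1 - d) powr q"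
    have "(1 - d) powr q < 1 powr q" using d0 q by (intro powr_less_mono2) auto
    then have cc0: "0 < cc" unfolding cc_def by simp
    have "eventually (\<lambda>n. dr n < cc * \<epsilon> / 2) sequentially"
      using drlim cc0 eps by (intro order_tendstoD(2)) auto
    then show "eventually (\<lambda>n. c n < y) sequentially"
    proof (rule eventually_mono)
      fix n assume dn: "dr n < cc * \<epsilon> / 2"
      have "c n \<le> (\<integral>\<^sup>+t. ennreal (d powr q) * (ennreal (hf t powr q) * indicator {0<..1} t)
              + ennreal (1 / cc) * (ennreal (hf t powr q - Rf (\<phi> n) t powr q) * indicator {0<..1} t) \<partial>lborel)"
        unfolding c_def
      proof (intro nn_integral_mono)
        fix t
        have pw: "(hf t - Rf (\<phi> n) t) powr q \<le> d powr q * hf t powr q + (hf t powr q - Rf (\<phi> n) t powr q) / cc"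
          unfolding cc_def using pt[of n t] d0 q by (intro pw_ineq) auto
        have "ennreal ((hf t - Rf (\<phi> n) t) powr q)
             \<le> ennreal (d powr q * hf t powr q + (hf t powr q - Rf (\<phi> n) t powr q) / cc)"
          using pw by (rule ennreal_leI)
        also have "\<dots> = ennreal (d powr q) * ennreal (hf t powr q) + ennreal (1 / cc) * ennreal (hf t powr q - Rf (\<phi> n) t powr q)"
        proof -
          have B0: "0 \<le> hf t powr q - Rf (\<phi> n) t powr q" using ptq[of n t] by simp
          have e1: "ennreal (d powr q * hf t powr q) = ennreal (d powr q) * ennreal (hf t powr q)"
            by (rule ennreal_mult) auto
          have e2: "ennreal ((hf t powr q - Rf (\<phi> n) t powr q) / cc) = ennreal (1 / cc) * ennreal (hf t powr q - Rf (\<phi> n) t powr q)"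
            using cc0 B0 by (subst ennreal_mult[symmetric]) auto
          have e3: "ennreal (d powr q * hf t powr q + (hf t powr q - Rf (\<phi> n) t powr q) / cc)
             = ennreal (d powr q * hf t powr q) + ennreal ((hf t powr q - Rf (\<phi> n) t powr q) / cc)"
            using cc0 B0 by (intro ennreal_plus) auto
          show ?thesis unfolding e3 e1 e2 ..
        qed
        finally show "ennreal ((hf t - Rf (\<phi> n) t) powr q) * indicator {0<..1} t
           \<le> ennreal (d powr q) * (ennreal (hf t powr q) * indicator {0<..1} t)
              + ennreal (1 / cc) * (ennreal (hf t powr q - Rf (\<phi> n) t powr q) * indicator {0<..1} t)"
          by (cases "t \<in> {0<..1}") auto
      qed
      also have "\<dots> = ennreal (d powr q) * H + ennreal (1 / cc) * D n"
        unfolding H_def D_def by (subst nn_integral_add) (auto simp: nn_integral_cmult)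
      also have "\<dots> = ennreal (d powr q * Hr + dr n / cc)"
      proof -
        have dr0: "0 \<le> dr n" unfolding dr_def by simp
        have e1: "ennreal (d powr q * Hr) = ennreal (d powr q) * ennreal Hr"
          by (rule ennreal_mult) (auto simp: Hr0)
        have e2: "ennreal (dr n / cc) = ennreal (1 / cc) * ennreal (dr n)"
          using cc0 dr0 by (subst ennreal_mult[symmetric]) auto
        have e3: "ennreal (d powr q * Hr + dr n / cc) = ennreal (d powr q * Hr) + ennreal (dr n / cc)"
          using cc0 dr0 Hr0 by (intro ennreal_plus) auto
        show ?thesis unfolding e3 e1 e2 HHr DD ..
      qed
      also have "\<dots> \<le> ennreal \<epsilon>"
      proof (intro ennreal_leI)
        have "dr n / cc < \<epsilon> / 2" using dn cc0 by (simp add: field_simps)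
        then show "d powr q * Hr + dr n / cc \<le> \<epsilon>" using dH by linarith
      qed
      also have "\<dots> < y" by (rule eps(2))
      finally show "c n < y" .
    qed
  qed
qed

end

theorem theorem6p1:
  fixes M :: "'a measure" and T :: "'a set set" and q :: real
    and g :: "real \<Rightarrow> real" and \<phi> :: "nat \<Rightarrow> 'a \<Rightarrow> real"
  assumes "prob_space M" and "nonatomic M" and "is_tree M T"
    and "0 < q" and "q < 1"
    and "\<forall>t\<in>{0<..1}. 0 \<le> g t"
    and "set_integrable lborel {0<..1} g"
    and "\<forall>s t. 0 < s \<longrightarrow> s \<le> t \<longrightarrow> t \<le> 1 \<longrightarrow> g t \<le> g s"
    and "(\<integral>\<^sup>+ t\<in>{0<..1}. ennreal (avg g t powr q) \<partial>lborel) < \<infinity>"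
    and "\<forall>n. \<phi> n \<in> borel_measurable M"
    and "\<forall>n. \<forall>x\<in>space M. 0 \<le> \<phi> n x"
    and "\<forall>n. \<forall>t\<in>{0<..1}. rearr M (\<lambda>x. ennreal (\<phi> n x)) t = ennreal (g t)"
    and "(\<lambda>n. \<integral>\<^sup>+ x. epowr (dyadic_max M T (\<phi> n) x) q \<partial>M)
           \<longlonglongrightarrow> (\<integral>\<^sup>+ t\<in>{0<..1}. ennreal (avg g t powr q) \<partial>lborel)"
  shows "(\<lambda>n. \<integral>\<^sup>+ t\<in>{0<..1}. epowr (ediff (rearr M (dyadic_max M T (\<phi> n)) t) (avg g t)) q \<partial>lborel)
           \<longlonglongrightarrow> 0"
proof -
  interpret S M T g using assms by (intro S.intro S_axioms.intro) auto
  show ?thesis by (rule main_conv[OF assms(4,5,9,10,11,12,13)])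
qed

end
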